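(* Fix $n\in\mathbb N$ and let $c^1\to c^2\to\dots\to c^k$ be a sequence of PSSPM transitions between configurations reachable in PSSPM from $(\underline{n})$. Suppose there is a column $i$ such that (1) for all $1\le t\le k$, $c^t_i=\max_j c^t_j$, and (2) $c^1_i\le c^1_{i+1}+2$. Then for all $1\le t\le k$, $c^t_i\le c^t_{i+1}+2$. Symmetrically, if (1) holds and $c^1_{i-1}+2\ge c^1_i$, then for all $1\le t\le k$, $c^t_{i-1}+2\ge c^t_i$.
   Context: A configuration is a sequence $(c_i)_{i\in\mathbb Z}$ of nonnegative integers with only finitely many positive values; $(\underline{n})$ denotes the configuration with $c_0=n$ and $c_i=0$ otherwise. Rule $\mathcal L$ at column $i$ is applicable if $c_{i-1}+2\le c_i$ and moves one grain from column $i$ to column $i-1$; rule $\mathcal R$ at column $i$ is applicable if $c_i\ge c_{i+1}+2$ and moves one grain from column $i$ to column $i+1$. A PSSPM transition $c\to c'$ applies rules simultaneously on every column where some rule is applicable, at most one rule per column (when both are applicable on a column, one is chosen). A configuration is reachable in PSSPM from $(\underline{n})$ if obtained from it by finitely many PSSPM transitions. *)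

theory Defs
  imports Main
begin

type_synonym config = "int \<Rightarrow> nat"

definition is_config :: "config \<Rightarrow> bool" where
  "is_config c \<longleftrightarrow> finite {i. c i > 0}"

definition single :: "nat \<Rightarrow> config" where
  "single n = (\<lambda>i. if i = 0 then n else 0)"

datatype rule = NoRule | RuleL | RuleR

definition L_applicable :: "config \<Rightarrow> int \<Rightarrow> bool" where
  "L_applicable c i \<longleftrightarrow> c (i - 1) + 2 \<le> c i"

definition R_applicable :: "config \<Rightarrow> int \<Rightarrow> bool" where
  "R_applicable c i \<longleftrightarrow> c i \<ge> c (i + 1) + 2"

definition valid_choice :: "config \<Rightarrow> (int \<Rightarrow> rule) \<Rightarrow> bool" where
  "valid_choice c r \<longleftrightarrow>
     (\<forall>i. (r i = RuleL \<longrightarrow> L_applicable c i) \<and>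
          (r i = RuleR \<longrightarrow> R_applicable c i) \<and>
          (r i = NoRule \<longleftrightarrow> \<not> L_applicable c i \<and> \<not> R_applicable c i))"

definition apply_choice :: "config \<Rightarrow> (int \<Rightarrow> rule) \<Rightarrow> config" where
  "apply_choice c r = (\<lambda>i. c i - (if r i = NoRule then 0 else 1)
                          + (if r (i + 1) = RuleL then 1 else 0)
                          + (if r (i - 1) = RuleR then 1 else 0))"

definition psspm_step :: "config \<Rightarrow> config \<Rightarrow> bool" where
  "psspm_step c c' \<longleftrightarrow> (\<exists>r. valid_choice c r \<and> c' = apply_choice c r)"

definition psspm_reachable :: "nat \<Rightarrow> config \<Rightarrow> bool" where
  "psspm_reachable n c \<longleftrightarrow> psspm_step\<^sup>*\<^sup>* (single n) c"

end

theory Submission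
  imports Defs
begin

lemma step_supp:
  assumes "psspm_step c c'" "finite {i. c i > 0}"
  shows "finite {i. c' i > 0}"
proof -
  obtain r where v: "valid_choice c r" and e: "c' = apply_choice c r"
    using assms(1) unfolding psspm_step_def by blast
  let ?S = "{i. c i > 0}"
  have "{i. c' i > 0} \<subseteq> ?S \<union> (\<lambda>x. x + 1) ` ?S \<union> (\<lambda>x. x - 1) ` ?S"
  proof
    fix i assume "i \<in> {i. c' i > 0}"
    hence p: "c' i > 0" by simp
    show "i \<in> ?S \<union> (\<lambda>x. x + 1) ` ?S \<union> (\<lambda>x. x - 1) ` ?S"
    proof (cases "c i > 0")
      case True thus ?thesis by simp
    next
      case False
      hence "r (i+1) = RuleL \<or> r (i - 1) = RuleR" using p e unfolding apply_choice_def
        by (auto split: if_splits)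
      thus ?thesis
      proof
        assume "r (i+1) = RuleL"
        hence "L_applicable c (i+1)" using v unfolding valid_choice_def by blast
        hence "c (i+1) > 0" unfolding L_applicable_def by simp
        hence "i + 1 \<in> ?S" by simp
        moreover have "i = (i+1) - 1" by simp
        ultimately show ?thesis by blast
      next
        assume "r (i-1) = RuleR"
        hence "R_applicable c (i-1)" using v unfolding valid_choice_def by blast
        hence "c (i-1) > 0" unfolding R_applicable_def by simp
        hence "i - 1 \<in> ?S" by simp
        moreover have "i = (i-1) + 1" by simp
        ultimately show ?thesis by blast
      qed
    qed
  qed
  thus ?thesis using assms(2) by (meson finite_Un finite_imageI finite_subset)
qed

lemma reach_supp:
  assumes "psspm_reachable n c" shows "finite {i. c i > 0}"
proof -
  have "psspm_step\<^sup>*\<^sup>* (single n) c" using assms unfolding psspm_reachable_def .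
  thus ?thesis
  proof induction
    case base
    have "{i. single n i > 0} \<subseteq> {0}" unfolding single_def by auto
    thus ?case using finite_subset by blast
  next
    case (step y z) thus ?case using step_supp by blast
  qed
qed

lemma reach_range:
  assumes "psspm_reachable n c" shows "finite (range c)"
proof -
  have "range c \<subseteq> insert 0 (c ` {i. c i > 0})" by auto
  thus ?thesis using reach_supp[OF assms] finite_subset by blast
qed

lemma step_right:
  assumes v: "valid_choice c r" and m1: "c (i+1) \<le> c i" and m2: "c (i-1) \<le> c i"
    and h: "c i \<le> c (i+1) + 2"
  shows "apply_choice c r i \<le> apply_choice c r (i+1) + 2"
proof -
  have a: "r (i+1) \<noteq> RuleL"
  proof
    assume "r (i+1) = RuleL"
    hence "L_applicable c (i+1)" using v unfolding valid_choice_def by blast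
    thus False using m1 unfolding L_applicable_def by simp
  qed
  have b: "r (i-1) \<noteq> RuleR"
  proof
    assume "r (i-1) = RuleR"
    hence "R_applicable c (i-1)" using v unfolding valid_choice_def by blast
    thus False using m2 unfolding R_applicable_def by simp
  qed
  have c: "r i = NoRule \<Longrightarrow> c i < c (i+1) + 2"
    using v unfolding valid_choice_def R_applicable_def by auto
  have d: "r i = RuleR \<Longrightarrow> c i \<ge> c (i+1) + 2"
    using v unfolding valid_choice_def R_applicable_def by auto
  have f: "r (i+1) \<noteq> NoRule \<Longrightarrow> c (i+1) \<ge> 2"
    using v unfolding valid_choice_def L_applicable_def R_applicable_def by (cases "r (i+1)") force+
  have e: "i + 1 - 1 = i" "i + 1 + 1 = i + 2" by simp_all
  show ?thesis unfolding apply_choice_def e using a b c d f h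
    by (cases "r i"; auto split: if_splits)
qed

lemma step_left:
  assumes v: "valid_choice c r" and m1: "c (i+1) \<le> c i" and m2: "c (i-1) \<le> c i"
    and h: "c i \<le> c (i-1) + 2"
  shows "apply_choice c r i \<le> apply_choice c r (i-1) + 2"
proof -
  have a: "r (i+1) \<noteq> RuleL"
  proof
    assume "r (i+1) = RuleL"
    hence "L_applicable c (i+1)" using v unfolding valid_choice_def by blast
    thus False using m1 unfolding L_applicable_def by simp
  qed
  have b: "r (i-1) \<noteq> RuleR"
  proof
    assume "r (i-1) = RuleR"
    hence "R_applicable c (i-1)" using v unfolding valid_choice_def by blast
    thus False using m2 unfolding R_applicable_def by simp
  qed
  have c: "r i = NoRule \<Longrightarrow> c i < c (i-1) + 2"
    using v unfolding valid_choice_def L_applicable_def by auto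
  have d: "r i = RuleL \<Longrightarrow> c i \<ge> c (i-1) + 2"
    using v unfolding valid_choice_def L_applicable_def by auto
  have f: "r (i-1) \<noteq> NoRule \<Longrightarrow> c (i-1) \<ge> 2"
    using v unfolding valid_choice_def L_applicable_def R_applicable_def by (cases "r (i-1)") force+
  have e: "i - 1 + 1 = i" "i - 1 - 1 = i - 2" by simp_all
  show ?thesis unfolding apply_choice_def e using a b c d f h
    by (cases "r i"; auto split: if_splits)
qed

theorem lemma1:
  fixes n k :: nat and c :: "nat \<Rightarrow> config" and i :: int
  assumes reach: "\<And>t. 1 \<le> t \<Longrightarrow> t \<le> k \<Longrightarrow> psspm_reachable n (c t)"
    and steps: "\<And>t. 1 \<le> t \<Longrightarrow> t < k \<Longrightarrow> psspm_step (c t) (c (Suc t))"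
    and maxcol: "\<And>t. 1 \<le> t \<Longrightarrow> t \<le> k \<Longrightarrow> c t i = Max (range (c t))"
  shows "(c 1 i \<le> c 1 (i + 1) + 2 \<longrightarrow>
            (\<forall>t. 1 \<le> t \<and> t \<le> k \<longrightarrow> c t i \<le> c t (i + 1) + 2))
       \<and> (c 1 (i - 1) + 2 \<ge> c 1 i \<longrightarrow>
            (\<forall>t. 1 \<le> t \<and> t \<le> k \<longrightarrow> c t (i - 1) + 2 \<ge> c t i))"
proof -
  have mx: "c t j \<le> c t i" if "1 \<le> t" "t \<le> k" for t j
    using maxcol[OF that] reach_range[OF reach[OF that]] by simp
  have R: "c t i \<le> c t (i + 1) + 2" if h1: "c 1 i \<le> c 1 (i + 1) + 2" and "1 \<le> t" "t \<le> k" for t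
    using that(2,3)
  proof (induction t)
    case 0 thus ?case by simp
  next
    case (Suc t)
    show ?case
    proof (cases "t = 0")
      case True thus ?thesis using h1 by simp
    next
      case False
      hence t1: "1 \<le> t" "t < k" using Suc by auto
      obtain r where v: "valid_choice (c t) r" and e: "c (Suc t) = apply_choice (c t) r"
        using steps[OF t1] unfolding psspm_step_def by blast
      show ?thesis unfolding e
        by (rule step_right[OF v]) (use mx t1 Suc in auto)
    qed
  qed
  have L: "c t i \<le> c t (i - 1) + 2" if h1: "c 1 i \<le> c 1 (i - 1) + 2" and "1 \<le> t" "t \<le> k" for t
    using that(2,3)
  proof (induction t)
    case 0 thus ?case by simp
  next
    case (Suc t)
    show ?case
    proof (cases "t = 0")
      case True thus ?thesis using h1 by simp
    next
      case False
      hence t1: "1 \<le> t" "t < k" using Suc by auto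
      obtain r where v: "valid_choice (c t) r" and e: "c (Suc t) = apply_choice (c t) r"
        using steps[OF t1] unfolding psspm_step_def by blast
      show ?thesis unfolding e
        by (rule step_left[OF v]) (use mx t1 Suc in auto)
    qed
  qed
  show ?thesis using R L by auto
qed

end
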